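(* Let $\mathcal{H}(T^2)=\hat{\mathcal{O}}_{\mathbb{Q}}$ be the $\mathbb{C}_q$-module of (possibly infinite) formal sums $\sum_{n,m\in\mathbb{Q}}c_{n,m}Y^nX^m$ with $c_{n,m}\in\mathbb{C}_q$. For $\gamma=\begin{pmatrix} a & b\\ c & d\end{pmatrix}\in SL(2,\mathbb{Z})$ let $\rho(\gamma)$ be the $\mathbb{C}_q$-linear map on $\mathcal{H}(T^2)$ defined termwise on basis elements by $$\rho(\gamma)(Y^nX^m)=q^{-abm^2-2bcmn-cdn^2}\,Y^{bm+dn}X^{am+cn}\qquad(m,n\in\mathbb{Q}).$$ Then this representation of $SL(2,\mathbb{Z})$ on $\mathcal{H}(T^2)$ is faithful: if $\rho(\gamma)=\rho(\gamma')$ then $\gamma=\gamma'$.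
   Context: $\mathbb{C}_q$ denotes the algebraic closure of the field $\mathbb{C}((q))$ of formal Laurent series in $q$. The symbols $Y^nX^m$ ($m,n\in\mathbb{Q}$) are formal basis elements (ordered monomials in the quantum torus with $X^\lambda Y^\mu=q^{-2\lambda\mu}Y^\mu X^\lambda$), and elements of $\hat{\mathcal{O}}_{\mathbb{Q}}$ are arbitrary formal $\mathbb{C}_q$-linear combinations of them, with infinitely many nonzero coefficients allowed; $\rho(\gamma)$ acts coefficientwise on such sums. *)

theory Defs
  imports "HOL-Computational_Algebra.Formal_Laurent_Series" "HOL-Algebra.Algebraic_Closure_Type"
begin

type_synonym Cq = "complex fls alg_closure"

definition qC :: Cq where "qC = to_ac fls_X"

definition qpow :: "rat \<Rightarrow> Cq" where
  "qpow = (SOME f. f 1 = qC \<and> (\<forall>r s. f (r + s) = f r * f s) \<and> (\<forall>r. f r \<noteq> 0))"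

text \<open>Elements of O_Q-hat: arbitrary formal sums  sum c(n,m) Y^n X^m, recorded by their
  coefficient function (n,m) \<mapsto> c(n,m); infinitely many nonzero coefficients allowed.\<close>
type_synonym OQ = "rat \<times> rat \<Rightarrow> Cq"

text \<open>SL(2,Z), a matrix (a b; c d) stored as the tuple (a,b,c,d).\<close>
definition SL2Z :: "(int \<times> int \<times> int \<times> int) set" where
  "SL2Z = {(a, b, c, d). a * d - b * c = 1}"

text \<open>rho(gamma) acting coefficientwise: Y^n X^m is sent to
  q^(-abm^2-2bcmn-cdn^2) Y^(bm+dn) X^(am+cn); the coefficient of Y^n' X^m' of the image
  collects the contributions of all (n,m) mapped to (n',m') (exactly one for gamma in SL2Z).\<close>
definition rho :: "int \<times> int \<times> int \<times> int \<Rightarrow> OQ \<Rightarrow> OQ" where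
  "rho \<gamma> f = (case \<gamma> of (a, b, c, d) \<Rightarrow>
     (\<lambda>(n', m'). \<Sum>(n, m) \<in> {(n, m). of_int b * m + of_int d * n = n' \<and> of_int a * m + of_int c * n = m'}.
        qpow (- (of_int a * of_int b * m^2 + 2 * of_int b * of_int c * m * n + of_int c * of_int d * n^2))
          * f (n, m)))"

end

theory Submission
  imports Defs
begin

lemma qC_nz: "qC \<noteq> 0"
  by (simp add: qC_def)

primrec rr :: "nat \<Rightarrow> Cq" where
  "rr 0 = qC"
| "rr (Suc k) = (SOME y. y ^ Suc k = rr k)"

declare rr.simps(2)[simp del]

lemma rr_Suc: "rr (Suc k) ^ Suc k = rr k"
proof -
  have "\<exists>y. y ^ Suc k = rr k" by (rule nth_root_exists) simp
  then show ?thesis unfolding rr.simps by (rule someI_ex)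
qed

lemma rr_nz: "rr k \<noteq> 0"
proof (induction k)
  case 0 then show ?case by (simp add: qC_nz)
next
  case (Suc k)
  show ?case
  proof
    assume "rr (Suc k) = 0"
    then show False using Suc rr_Suc[of k] by (metis power_0_Suc)
  qed
qed

definition good :: "nat \<Rightarrow> rat \<Rightarrow> bool" where
  "good k x \<longleftrightarrow> x * of_nat (fact k) \<in> \<int>"

definition FF :: "nat \<Rightarrow> rat \<Rightarrow> Cq" where
  "FF k x = rr k powi \<lfloor>x * of_nat (fact k)\<rfloor>"

lemma good_Suc: "good k x \<Longrightarrow> good (Suc k) x"
proof -
  assume "good k x"
  then obtain z where z: "x * of_nat (fact k) = of_int z" unfolding good_def by (auto elim: Ints_cases)
  have "x * of_nat (fact (Suc k)) = of_int (z * int (Suc k))"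
    using z by (simp add: algebra_simps)
  then show ?thesis unfolding good_def by (metis Ints_of_int)
qed

lemma FF_Suc: "good k x \<Longrightarrow> FF (Suc k) x = FF k x"
proof -
  assume "good k x"
  then obtain z where z: "x * of_nat (fact k) = of_int z" unfolding good_def by (auto elim: Ints_cases)
  have e: "x * of_nat (fact (Suc k)) = of_int (int (Suc k) * z)"
    using z by (simp add: algebra_simps)
  have "FF (Suc k) x = rr (Suc k) powi \<lfloor>of_int (int (Suc k) * z) :: rat\<rfloor>" unfolding FF_def by (simp only: e)
  then have "FF (Suc k) x = rr (Suc k) powi (int (Suc k) * z)" by (simp only: floor_of_int)
  also have "\<dots> = (rr (Suc k) ^ Suc k) powi z" by (simp only: power_int_power)
  also have "\<dots> = FF k x" by (simp only: rr_Suc FF_def z floor_of_int)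
  finally show ?thesis .
qed

lemma good_mono: "good k x \<Longrightarrow> k \<le> K \<Longrightarrow> good K x \<and> FF K x = FF k x"
proof (induction K)
  case 0 then show ?case by simp
next
  case (Suc K)
  show ?case
  proof (cases "k = Suc K")
    case True then show ?thesis using Suc by simp
  next
    case False
    then have "good K x \<and> FF K x = FF k x" using Suc by simp
    then show ?thesis using good_Suc FF_Suc by metis
  qed
qed

definition den :: "rat \<Rightarrow> nat" where "den x = nat (snd (quotient_of x))"

lemma good_den: "good (den x) x"
proof -
  obtain p q where pq: "quotient_of x = (p, q)" by (cases "quotient_of x") auto
  have qpos: "q > 0" using quotient_of_denom_pos[OF pq] .
  have x: "x = of_int p / of_int q" using quotient_of_div[OF pq] .
  have "nat q dvd fact (nat q)" by (rule dvd_fact) (use qpos in auto)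
  then obtain t where t: "fact (nat q) = nat q * t" by (auto elim: dvdE)
  have "x * of_nat (fact (nat q)) = of_int (p * int t)"
    using qpos by (simp add: x t)
  then show ?thesis unfolding good_def den_def pq by (metis Ints_of_int snd_conv)
qed

definition ff :: "rat \<Rightarrow> Cq" where "ff x = FF (den x) x"

lemma ff_K: "den x \<le> K \<Longrightarrow> ff x = FF K x \<and> good K x"
  using good_mono[OF good_den] ff_def by metis

lemma ff_props: "ff 1 = qC \<and> (\<forall>r s. ff (r + s) = ff r * ff s) \<and> (\<forall>r. ff r \<noteq> 0)"
proof (intro conjI allI)
  have "den 1 \<le> 1" by (simp add: den_def)
  then have "ff 1 = FF 1 1" using ff_K by blast
  also have "\<dots> = rr 1" by (simp add: FF_def)
  also have "\<dots> = qC" using rr_Suc[of 0] by simp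
  finally show "ff 1 = qC" .
next
  fix r s
  define K where "K = max (den (r+s)) (max (den r) (den s))"
  have a: "ff (r+s) = FF K (r+s)" and b: "ff r = FF K r \<and> good K r" and c: "ff s = FF K s \<and> good K s"
    using ff_K K_def by auto
  obtain z1 where z1: "r * of_nat (fact K) = of_int z1" using b unfolding good_def by (auto elim: Ints_cases)
  obtain z2 where z2: "s * of_nat (fact K) = of_int z2" using c unfolding good_def by (auto elim: Ints_cases)
  have "(r + s) * of_nat (fact K) = of_int (z1 + z2)" using z1 z2 by (simp add: algebra_simps)
  then have "FF K (r+s) = rr K powi (z1 + z2)" by (simp add: FF_def)
  also have "\<dots> = rr K powi z1 * rr K powi z2" by (rule power_int_add) (simp add: rr_nz)
  finally show "ff (r + s) = ff r * ff s" using a b c z1 z2 by (simp add: FF_def)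
next
  fix r show "ff r \<noteq> 0" by (simp add: ff_def FF_def rr_nz)
qed

lemma qpow_nz: "qpow r \<noteq> 0"
proof -
  have "qpow 1 = qC \<and> (\<forall>r s. qpow (r + s) = qpow r * qpow s) \<and> (\<forall>r. qpow r \<noteq> 0)"
    unfolding qpow_def by (rule someI[of _ ff]) (rule ff_props)
  then show ?thesis by blast
qed

definition delta :: "rat \<times> rat \<Rightarrow> OQ" where "delta p = (\<lambda>x. if x = p then 1 else 0)"

lemma sum_delta_nz: "(\<Sum>x\<in>S. h x) \<noteq> 0 \<Longrightarrow> (\<And>x. x \<noteq> p \<Longrightarrow> h x = 0) \<Longrightarrow> p \<in> S"
  by (metis (mono_tags, lifting) sum.neutral)

lemma rho_delta_nz:
  assumes "rho (a,b,c,d) (delta p) y \<noteq> 0"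
  shows "p \<in> {(n, m). of_int b * m + of_int d * n = fst y \<and> of_int a * m + of_int c * n = snd y}"
proof -
  obtain y1 y2 where y: "y = (y1, y2)" by (cases y)
  show ?thesis using assms unfolding y rho_def by (auto dest!: sum_delta_nz simp: delta_def split: if_splits)
qed

lemma S_single:
  assumes "a * d - b * c = 1"
  shows "{(n, m). of_int b * m + of_int d * n = of_int b * m0 + of_int d * n0 \<and>
                  of_int a * m + of_int c * n = of_int a * m0 + of_int c * n0} = {(n0::rat, m0::rat)}"
proof -
  have det: "of_int a * of_int d - of_int b * of_int c = (1::rat)"
    using assms by (metis of_int_1 of_int_diff of_int_mult)
  { fix n m :: rat
    assume h1: "of_int b * m + of_int d * n = of_int b * m0 + of_int d * n0"
       and h2: "of_int a * m + of_int c * n = of_int a * m0 + of_int c * n0"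
    have "(of_int a * of_int d - of_int b * of_int c) * (n - n0) =
          of_int a * (of_int b * m + of_int d * n - (of_int b * m0 + of_int d * n0))
          - of_int b * (of_int a * m + of_int c * n - (of_int a * m0 + of_int c * n0))"
      by (simp add: algebra_simps)
    then have "n = n0" using h1 h2 det by simp
    have "(of_int a * of_int d - of_int b * of_int c) * (m - m0) =
          of_int d * (of_int a * m + of_int c * n - (of_int a * m0 + of_int c * n0))
          - of_int c * (of_int b * m + of_int d * n - (of_int b * m0 + of_int d * n0))"
      by (simp add: algebra_simps)
    then have "m = m0" using h1 h2 det by simp
    note \<open>n = n0\<close> this }
  then show ?thesis by auto
qed

lemma rho_delta_val:
  assumes "a * d - b * c = 1"
  shows "rho (a,b,c,d) (delta (n0, m0)) (of_int b * m0 + of_int d * n0, of_int a * m0 + of_int c * n0) =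
    qpow (- (of_int a * of_int b * m0^2 + 2 * of_int b * of_int c * m0 * n0 + of_int c * of_int d * n0^2))"
  unfolding rho_def using S_single[OF assms, of m0 n0] by (simp add: delta_def)

theorem mainTheorem2:
  assumes "\<gamma> \<in> SL2Z" and "\<gamma>' \<in> SL2Z" and "rho \<gamma> = rho \<gamma>'"
  shows "\<gamma> = \<gamma>'"
proof -
  obtain a b c d where g: "\<gamma> = (a,b,c,d)" by (cases \<gamma>) auto
  obtain a' b' c' d' where g': "\<gamma>' = (a',b',c',d')" by (cases \<gamma>') auto
  have det: "a * d - b * c = 1" using assms(1) g by (simp add: SL2Z_def)
  have v1: "rho (a',b',c',d') (delta (0, 1)) (of_int b, of_int a) \<noteq> 0"
    using rho_delta_val[OF det, of 0 1] qpow_nz assms(3) g g' by simp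
  have v2: "rho (a',b',c',d') (delta (1, 0)) (of_int d, of_int c) \<noteq> 0"
    using rho_delta_val[OF det, of 1 0] qpow_nz assms(3) g g' by simp
  show ?thesis using rho_delta_nz[OF v1] rho_delta_nz[OF v2] g g' by simp
qed

end
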